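(* Let $l_1,u_1,l_2,u_2$ be non-negative integers and $(f(k))$, $(g(k))$ complex sequences such that $\sum_{k=l_1}^{u_1}f(k)(1-t)^k=\sum_{k=l_2}^{u_2}g(k)t^k$ for all complex $t$. Let $s\in\mathbb{C}\setminus\mathbb{Z}^{-}$, $s\ne0$. Then \[ \sum_{k=l_1}^{u_1}\frac{f(k)}{\binom{k+s}{s}}=\sum_{k=l_2}^{u_2}\frac{g(k)s}{k+s},\qquad \sum_{k=l_1}^{u_1}\frac{f(k)}{k+1}=\sum_{k=l_2}^{u_2}\frac{g(k)}{k+1}, \] \[ \sum_{k=l_1}^{u_1}f(k)\frac{H_s-H_k}{\binom{k+s}{s}}=\sum_{k=l_2}^{u_2}g(k)\frac{s+1}{k+s}+\sum_{k=l_2}^{u_2}g(k)s\frac{H_{k+s-1}-1}{k+s}, \] \[ \sum_{k=l_1}^{u_1}f(k)\frac{1-H_k}{k+1}=\sum_{k=l_2}^{u_2}g(k)\frac{2}{k+1}+\sum_{k=l_2}^{u_2}g(k)\frac{H_k-1}{k+1}. \]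
   Context: $\mathbb{Z}^{-}$ denotes the set of negative integers. For complex $z$ not a negative integer, $H_z=\psi(z+1)+\gamma$; for integers $m\ge0$, $H_m=\sum_{j=1}^m1/j$. Binomial coefficients with complex entries: $\binom{x}{y}=\frac{\Gamma(x+1)}{\Gamma(y+1)\Gamma(x-y+1)}$. *)

theory Defs
  imports "HOL-Analysis.Analysis"
begin

definition Hc :: "complex \<Rightarrow> complex" where
  "Hc z = Digamma (z + 1) + euler_mascheroni"

definition cbinom :: "complex \<Rightarrow> complex \<Rightarrow> complex" where
  "cbinom x y = Gamma (x + 1) / (Gamma (y + 1) * Gamma (x - y + 1))"

end

theory Submission
  imports Defs "HOL-Computational_Algebra.Polynomial"
begin

definition LL :: "(nat \<Rightarrow> complex) \<Rightarrow> complex poly \<Rightarrow> complex" where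
  "LL w p = (\<Sum>j\<le>degree p. coeff p j * w j)"

lemma LL_bound: "degree p \<le> n \<Longrightarrow> LL w p = (\<Sum>j\<le>n. coeff p j * w j)"
  unfolding LL_def
  by (rule sum.mono_neutral_left) (auto simp: coeff_eq_0)

lemma LL_add: "LL w (p + q) = LL w p + LL w q"
proof -
  let ?n = "max (degree p) (degree q)"
  have "LL w (p+q) = (\<Sum>j\<le>?n. coeff (p+q) j * w j)"
    by (rule LL_bound) (simp add: degree_add_le)
  also have "\<dots> = (\<Sum>j\<le>?n. coeff p j * w j) + (\<Sum>j\<le>?n. coeff q j * w j)"
    by (simp add: algebra_simps sum.distrib)
  also have "\<dots> = LL w p + LL w q"
    using LL_bound[of p ?n w] LL_bound[of q ?n w] by simp
  finally show ?thesis .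
qed

lemma LL_smult: "LL w (smult c p) = c * LL w p"
proof -
  have "LL w (smult c p) = (\<Sum>j\<le>degree p. coeff (smult c p) j * w j)"
    by (rule LL_bound) simp
  thus ?thesis by (simp add: LL_def sum_distrib_left mult.assoc)
qed

lemma LL_diff: "LL w (p - q) = LL w p - LL w q"
  using LL_add[of w "p - q" q] by simp

lemma LL_sum: "LL w (\<Sum>k\<in>A. P k) = (\<Sum>k\<in>A. LL w (P k))"
  by (induction A rule: infinite_finite_induct) (simp_all add: LL_add, simp_all add: LL_def)

lemma LL_monom: "LL w (monom c k) = c * w k"
proof -
  have "LL w (monom c k) = (\<Sum>j\<le>k. coeff (monom c k) j * w j)"
    by (rule LL_bound) (simp add: degree_monom_le)
  also have "\<dots> = c * w k" by (subst sum.remove[of _ k]) (auto simp: coeff_monom)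
  finally show ?thesis .
qed

lemma LL_one: "LL w 1 = w 0"
  by (simp add: LL_def)

lemma LL_shift: "LL w (pCons 0 p) = LL (\<lambda>j. w (Suc j)) p"
proof -
  have "LL w (pCons 0 p) = (\<Sum>j\<le>Suc (degree p). coeff (pCons 0 p) j * w j)"
    by (rule LL_bound) (simp add: degree_pCons_le)
  also have "\<dots> = (\<Sum>j\<le>degree p. coeff p j * w (Suc j))"
    by (subst sum.atMost_Suc_shift) simp
  finally show ?thesis by (simp add: LL_def)
qed

lemma LL_wlin: "LL (\<lambda>j. a * v j + b * u j) p = a * LL v p + b * LL u p"
  by (simp add: LL_def algebra_simps sum.distrib sum_distrib_left)

lemma transfer_main:
  fixes l1 u1 l2 u2 :: nat and f g :: "nat \<Rightarrow> complex"
  assumes hyp: "\<forall>t::complex. (\<Sum>k=l1..u1. f k * (1 - t) ^ k) = (\<Sum>k=l2..u2. g k * t ^ k)"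
    and c: "\<And>k. LL w ([:1,-1:]^k) = c k"
  shows "(\<Sum>k=l1..u1. f k * c k) = (\<Sum>k=l2..u2. g k * w k)"
proof -
  let ?P1 = "\<Sum>k=l1..u1. smult (f k) ([:1,-1:]^k)"
  let ?P2 = "\<Sum>k=l2..u2. monom (g k) k"
  have "poly ?P1 = poly ?P2"
    using hyp by (auto simp: poly_sum poly_monom fun_eq_iff)
  hence eq: "?P1 = ?P2" by (simp add: poly_eq_poly_eq_iff)
  have "(\<Sum>k=l1..u1. f k * c k) = LL w ?P1"
    by (simp add: LL_sum LL_smult c)
  also have "\<dots> = LL w ?P2" by (simp add: eq)
  also have "\<dots> = (\<Sum>k=l2..u2. g k * w k)" by (simp add: LL_sum LL_monom)
  finally show ?thesis .
qed


definition aw :: "complex \<Rightarrow> nat \<Rightarrow> complex" where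
  "aw s j = s / (of_nat j + s)"
definition bw :: "complex \<Rightarrow> nat \<Rightarrow> complex" where
  "bw s j = (1 + s * Hc (of_nat j + s - 1)) / (of_nat j + s)"

lemma step_poly: "([:1,-1:]::complex poly) ^ Suc k = [:1,-1:]^k - pCons 0 ([:1,-1:]^k)"
  by (simp add: algebra_simps)

lemma poch_ne: "\<forall>n::nat. s + of_nat n \<noteq> 0 \<Longrightarrow> pochhammer (s+1) k \<noteq> (0::complex)"
  apply (simp add: pochhammer_eq_0_iff)
  by (metis add.commute add.left_commute add_eq_0_iff2 of_nat_Suc)

lemma aw_shift: "\<forall>n::nat. s + of_nat n \<noteq> 0 \<Longrightarrow> aw s (Suc j) = s/(s+1) * aw (s+1) j"
proof -
  assume h: "\<forall>n::nat. s + of_nat n \<noteq> 0"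
  have 1: "s + 1 \<noteq> 0" using h[rule_format, of 1] by simp
  have 2: "of_nat j + (s+1) \<noteq> 0" using h[rule_format, of "Suc j"] by (simp add: algebra_simps)
  have 3: "of_nat (Suc j) + s = of_nat j + (s+1)" by simp
  show ?thesis unfolding aw_def 3 using 1 2 by simp
qed

lemma alg1:
  fixes a b P s kk x :: complex
  assumes "a \<noteq> 0" "b \<noteq> 0" "P \<noteq> 0"
  shows "x/P - (a-1)/a*(x/(b*P/a)) = (b-a+1)*x/(b*P)"
  using assms by (simp add: field_simps)

lemma F_lemma: "\<forall>n::nat. s + of_nat n \<noteq> 0 \<Longrightarrow> LL (aw s) ([:1,-1:]^k) = fact k / pochhammer (s+1) k"
proof (induction k arbitrary: s)
  case 0
  then have "s \<noteq> 0" by (metis add.right_neutral of_nat_0)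
  then show ?case by (simp add: LL_one aw_def)
next
  case (Suc k)
  have h1: "\<forall>n::nat. (s+1) + of_nat n \<noteq> 0" using Suc.prems
    by (metis add.assoc of_nat_Suc add.commute)
  have 1: "s + 1 \<noteq> 0" using Suc.prems[rule_format, of 1] by simp
  have 2: "s + 1 + of_nat k \<noteq> 0" using Suc.prems[rule_format, of "Suc k"] by (simp add: algebra_simps)
  have P: "pochhammer (s+1) k \<noteq> 0" using poch_ne[OF Suc.prems] .
  have Q: "pochhammer (s+1+1) k = (s + 1 + of_nat k) * pochhammer (s+1) k / (s+1)"
    using pochhammer_rec[of "s+1" k] pochhammer_rec'[of "s+1" k] 1 by (simp add: field_simps)
  have "LL (aw s) ([:1,-1:]^Suc k) = LL (aw s) ([:1,-1:]^k) - s/(s+1) * LL (aw (s+1)) ([:1,-1:]^k)"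
    unfolding step_poly LL_diff LL_shift aw_shift[OF Suc.prems]
    using LL_wlin[of "s/(s+1)" "aw (s+1)" 0 "aw (s+1)"] by simp
  also have "\<dots> = fact k / pochhammer (s+1) k - s/(s+1) * (fact k / pochhammer (s+1+1) k)"
    using Suc.IH[OF Suc.prems] Suc.IH[OF h1] by simp
  also have "\<dots> = fact (Suc k) / pochhammer (s+1) (Suc k)"
    unfolding Q pochhammer_rec'[of "s+1" k] fact_Suc
    using alg1[OF 1 2 P, of "fact k"] by (simp add: algebra_simps)
  finally show ?case .
qed


lemma Hc_plus1: "z \<noteq> 0 \<Longrightarrow> Hc z = Hc (z - 1) + 1/z"
  unfolding Hc_def using Digamma_plus1[of z] by simp

lemma alg2:
  fixes a d H :: complex
  assumes "a \<noteq> 0" "d \<noteq> 0"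
  shows "(1 + (a-1)*H)/d = (a-1)/a * ((1 + a*H)/d) + 1/a^2 * (a/d)"
  using assms by (simp add: field_simps power2_eq_square)

lemma bw_shift: "\<forall>n::nat. s + of_nat n \<noteq> 0 \<Longrightarrow> bw s (Suc j) = s/(s+1) * bw (s+1) j + 1/(s+1)^2 * aw (s+1) j"
proof -
  assume h: "\<forall>n::nat. s + of_nat n \<noteq> 0"
  have 1: "s + 1 \<noteq> 0" using h[rule_format, of 1] by simp
  have 2: "of_nat j + (s+1) \<noteq> 0" using h[rule_format, of "Suc j"] by (simp add: algebra_simps)
  have 3: "of_nat (Suc j) + s = of_nat j + (s+1)" by simp
  have 4: "of_nat (Suc j) + s - 1 = of_nat j + (s+1) - 1" by simp
  show ?thesis unfolding aw_def bw_def 3 4 using alg2[OF 1 2, of "Hc (of_nat j + (s+1) - 1)"] by simp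
qed

lemma alg3:
  fixes a b P h x m :: complex
  assumes "a \<noteq> 0" "b \<noteq> 0" "P \<noteq> 0" "m \<noteq> 0" "b = a + m - 1"
  shows "h*x/P - (a-1)/a * ((h+1/a)*x/(b*P/a)) - 1/a^2 * (x/(b*P/a))
     = (h - 1/m)*(m*x)/(b*P)"
proof -
  have "h*x/P - (a-1)/a * ((h+1/a)*x/(b*P/a)) - 1/a^2 * (x/(b*P/a))
     = (h*x*a*b - (a-1)*(h*a+1)*x - x) / (a*b*P)"
    using assms(1-4) by (simp add: field_simps power2_eq_square)
  also have "\<dots> = (h*m-1)*x*a / (a*b*P)"
    by (simp add: assms(5) algebra_simps)
  also have "\<dots> = (h - 1/m)*(m*x)/(b*P)"
    using assms(1-4) by (simp add: field_simps)
  finally show ?thesis .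
qed

lemma G_lemma: "\<forall>n::nat. s + of_nat n \<noteq> 0 \<Longrightarrow>
   LL (bw s) ([:1,-1:]^k) = (Hc s - harm k) * fact k / pochhammer (s+1) k"
proof (induction k arbitrary: s)
  case 0
  then have s0: "s \<noteq> 0" by (metis add.right_neutral of_nat_0)
  have "bw s 0 = Hc s" unfolding bw_def using Hc_plus1[OF s0] s0 by (simp add: field_simps)
  then show ?case by (simp add: LL_one harm_def)
next
  case (Suc k)
  have h1: "\<forall>n::nat. (s+1) + of_nat n \<noteq> 0" using Suc.prems
    by (metis add.assoc of_nat_Suc add.commute)
  have 1: "s + 1 \<noteq> 0" using Suc.prems[rule_format, of 1] by simp
  have 2: "s + 1 + of_nat k \<noteq> 0" using Suc.prems[rule_format, of "Suc k"] by (simp add: algebra_simps)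
  have P: "pochhammer (s+1) k \<noteq> 0" using poch_ne[OF Suc.prems] .
  have Q: "pochhammer (s + 1 + 1) k = (s + 1 + of_nat k) * pochhammer (s+1) k / (s+1)"
    using pochhammer_rec[of "s+1" k] pochhammer_rec'[of "s+1" k] 1 by (simp add: field_simps)
  have H1: "Hc (s+1) = Hc s + 1/(s+1)" using Hc_plus1[OF 1] by simp
  have 4: "of_nat k + 1 \<noteq> (0::complex)" by (metis add.commute of_nat_Suc of_nat_neq_0)
  have 5: "s + 1 + of_nat k = s + 1 + (of_nat k + 1) - 1" by simp
  have "LL (bw s) ([:1,-1:]^Suc k) = LL (bw s) ([:1,-1:]^k)
      - (s/(s+1) * LL (bw (s+1)) ([:1,-1:]^k) + 1/(s+1)^2 * LL (aw (s+1)) ([:1,-1:]^k))"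
    unfolding step_poly LL_diff LL_shift bw_shift[OF Suc.prems] LL_wlin by simp
  also have "\<dots> = (Hc s - harm k) * fact k / pochhammer (s+1) k
      - s/(s+1) * ((Hc s + 1/(s+1) - harm k) * fact k / pochhammer (s + 1 + 1) k)
      - 1/(s+1)^2 * (fact k / pochhammer (s + 1 + 1) k)"
    using Suc.IH[OF Suc.prems] Suc.IH[OF h1] F_lemma[OF h1] H1 by (simp add: algebra_simps)
  also have "\<dots> = (Hc s - harm (Suc k)) * fact (Suc k) / pochhammer (s+1) (Suc k)"
    unfolding Q pochhammer_rec'[of "s+1" k] fact_Suc harm_Suc
    using alg3[OF 1 2 P 4 5, of "Hc s - harm k" "fact k"]
    by (simp add: algebra_simps inverse_eq_divide)
  finally show ?case .
qed

lemma Hc_nat: "Hc (of_nat n) = harm n"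
  unfolding Hc_def using Digamma_of_nat[of n, where 'a=complex] by (simp add: add.commute)

lemma fact_poch2: "fact k / pochhammer (2::complex) k = 1 / (of_nat k + 1)"
proof -
  have "fact (Suc k) = pochhammer (2::complex) k"
    using pochhammer_fact[of "Suc k", where 'a=complex] pochhammer_rec[of "1::complex" k] by simp
  hence "pochhammer (2::complex) k = (of_nat k + 1) * fact k" by (simp add: fact_Suc algebra_simps)
  moreover have "(of_nat k + 1::complex) \<noteq> 0" by (metis add.commute of_nat_Suc of_nat_neq_0)
  ultimately show ?thesis by simp
qed

lemma ok1: "\<forall>n::nat. (1::complex) + of_nat n \<noteq> 0"
  by (metis add.commute of_nat_Suc of_nat_neq_0)

theorem corollary7:
  fixes l1 u1 l2 u2 :: nat and f g :: "nat \<Rightarrow> complex" and s :: complex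
  assumes hyp: "\<forall>t::complex. (\<Sum>k=l1..u1. f k * (1 - t) ^ k) = (\<Sum>k=l2..u2. g k * t ^ k)"
    and s_notnegint: "\<forall>n::int. n < 0 \<longrightarrow> s \<noteq> of_int n"
    and s_nz: "s \<noteq> 0"
  shows "(\<Sum>k=l1..u1. f k / cbinom (of_nat k + s) s) = (\<Sum>k=l2..u2. g k * s / (of_nat k + s))
    \<and> (\<Sum>k=l1..u1. f k / (of_nat k + 1)) = (\<Sum>k=l2..u2. g k / (of_nat k + 1))
    \<and> (\<Sum>k=l1..u1. f k * (Hc s - harm k) / cbinom (of_nat k + s) s)
        = (\<Sum>k=l2..u2. g k * (s + 1) / (of_nat k + s))
          + (\<Sum>k=l2..u2. g k * s * (Hc (of_nat k + s - 1) - 1) / (of_nat k + s))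
    \<and> (\<Sum>k=l1..u1. f k * (1 - harm k) / (of_nat k + 1))
        = (\<Sum>k=l2..u2. g k * 2 / (of_nat k + 1))
          + (\<Sum>k=l2..u2. g k * (harm k - 1) / (of_nat k + 1))"
proof -
  have ok: "\<forall>n::nat. s + of_nat n \<noteq> 0"
  proof
    fix n :: nat
    show "s + of_nat n \<noteq> 0"
    proof (cases n)
      case 0 thus ?thesis using s_nz by simp
    next
      case (Suc m)
      show ?thesis
      proof
        assume "s + of_nat n = 0"
        hence "s = - of_nat n" by (simp add: eq_neg_iff_add_eq_0)
        hence "s = of_int (- int n)" by simp
        moreover have "- int n < 0" using Suc by simp
        ultimately show False using s_notnegint by blast
      qed
    qed
  qed
  have s1: "s + 1 \<notin> \<int>\<^sub>\<le>\<^sub>0"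
  proof
    assume "s + 1 \<in> \<int>\<^sub>\<le>\<^sub>0"
    then obtain m :: nat where "s + 1 = - of_nat m" by (auto elim!: nonpos_Ints_cases')
    hence "s + of_nat (Suc m) = 0" by (simp add: algebra_simps eq_neg_iff_add_eq_0)
    thus False using ok by blast
  qed
  have cb: "cbinom (of_nat k + s) s = pochhammer (s+1) k / fact k" for k
  proof -
    have "cbinom (of_nat k + s) s = Gamma (s + 1 + of_nat k) / (Gamma (s+1) * Gamma (1 + of_nat k))"
      unfolding cbinom_def by (simp add: algebra_simps)
    also have "\<dots> = pochhammer (s+1) k / fact k"
      by (simp add: pochhammer_Gamma[OF s1] Gamma_fact)
    finally show ?thesis .
  qed
  have E1: "(\<Sum>k=l1..u1. f k * (fact k / pochhammer (s+1) k)) = (\<Sum>k=l2..u2. g k * aw s k)"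
    by (rule transfer_main[OF hyp F_lemma[OF ok]])
  have E2: "(\<Sum>k=l1..u1. f k * (fact k / pochhammer (1+1) k)) = (\<Sum>k=l2..u2. g k * aw 1 k)"
    by (rule transfer_main[OF hyp F_lemma[OF ok1]])
  have E3: "(\<Sum>k=l1..u1. f k * ((Hc s - harm k) * fact k / pochhammer (s+1) k)) = (\<Sum>k=l2..u2. g k * bw s k)"
    by (rule transfer_main[OF hyp G_lemma[OF ok]])
  have E4: "(\<Sum>k=l1..u1. f k * ((Hc 1 - harm k) * fact k / pochhammer (1+1) k)) = (\<Sum>k=l2..u2. g k * bw 1 k)"
    by (rule transfer_main[OF hyp G_lemma[OF ok1]])
  have Hc1: "Hc 1 = 1" using Hc_nat[of 1] by (simp add: harm_Suc harm_def)
  have P1: "(\<Sum>k=l1..u1. f k / cbinom (of_nat k + s) s) = (\<Sum>k=l2..u2. g k * s / (of_nat k + s))"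
    using E1 by (simp add: cb aw_def)
  have P2: "(\<Sum>k=l1..u1. f k / (of_nat k + 1)) = (\<Sum>k=l2..u2. g k / (of_nat k + 1))"
    using E2 by (simp add: fact_poch2 aw_def add.commute)
  have P3: "(\<Sum>k=l1..u1. f k * (Hc s - harm k) / cbinom (of_nat k + s) s)
        = (\<Sum>k=l2..u2. g k * (s + 1) / (of_nat k + s))
          + (\<Sum>k=l2..u2. g k * s * (Hc (of_nat k + s - 1) - 1) / (of_nat k + s))"
  proof -
    have "(\<Sum>k=l2..u2. g k * (s + 1) / (of_nat k + s))
          + (\<Sum>k=l2..u2. g k * s * (Hc (of_nat k + s - 1) - 1) / (of_nat k + s))
          = (\<Sum>k=l2..u2. g k * bw s k)"
      unfolding sum.distrib[symmetric] bw_def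
      by (rule sum.cong) (simp_all add: add_divide_distrib[symmetric] algebra_simps)
    thus ?thesis using E3 by (simp add: cb mult.assoc)
  qed
  have P4: "(\<Sum>k=l1..u1. f k * (1 - harm k) / (of_nat k + 1))
        = (\<Sum>k=l2..u2. g k * 2 / (of_nat k + 1))
          + (\<Sum>k=l2..u2. g k * (harm k - 1) / (of_nat k + 1))"
  proof -
    have "(\<Sum>k=l2..u2. g k * 2 / (of_nat k + 1))
          + (\<Sum>k=l2..u2. g k * (harm k - 1) / (of_nat k + 1))
          = (\<Sum>k=l2..u2. g k * bw 1 k)"
      unfolding sum.distrib[symmetric] bw_def
      by (rule sum.cong) (simp_all add: Hc_nat add_divide_distrib[symmetric] algebra_simps)
    moreover have "(\<Sum>k=l1..u1. f k * (1 - harm k) / (of_nat k + 1))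
       = (\<Sum>k=l1..u1. f k * ((Hc 1 - harm k) * fact k / pochhammer (1+1) k))"
    proof (rule sum.cong)
      fix x
      have "f x * ((Hc 1 - harm x) * fact x / pochhammer (1+1) x)
          = f x * (1 - harm x) * (fact x / pochhammer 2 x)" by (simp add: Hc1)
      also have "\<dots> = f x * (1 - harm x) / (of_nat x + 1)" by (simp add: fact_poch2)
      finally show "f x * (1 - harm x) / (of_nat x + 1)
         = f x * ((Hc 1 - harm x) * fact x / pochhammer (1+1) x)" by simp
    qed simp
    ultimately show ?thesis using E4 by simp
  qed
  show ?thesis using P1 P2 P3 P4 by blast
qed

end
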